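(* Let $I=(G,T,k)$, $G=(V,E)$, be a Node Multiway Cut instance satisfying: (R1) no two terminals are adjacent and $p(I)\ge 0$; (R2) no vertex of $V\setminus T$ is adjacent to two distinct terminals; (R3) for every terminal $t$ and every neighbour $w\in V\setminus T$ of $t$, the optimum of the LP-relaxation of $I$ with the additional constraint $d_w=0$ is strictly larger than $LP(I)$; (R5) every connected component of $G$ contains at least two terminals. Then $|T|\le 2k$.
   Context: A Node Multiway Cut instance $I=(G,T,k)$ consists of a simple undirected graph $G=(V,E)$, a set $T\subseteq V$ of terminals and an integer $k$; it is a YES-instance iff there is a set $X\subseteq V\setminus T$ with $|X|\le k$ such that every path in $G$ between two distinct terminals contains a vertex of $X$. Let $\mathcal P(I)$ be the set of all simple paths in $G$ connecting two distinct terminals. The LP-relaxation of $I$ is: minimize $\sum_{v\in V\setminus T} d_v$ subject to $\sum_{v\in V(P)\setminus T} d_v\ge 1$ for every $P\in\mathcal P(I)$ and $d_v\ge 0$ for all $v\in V\setminus T$. $LP(I)$ denotes its optimum value and $p(I)=k-LP(I)$. *)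

theory Defs
  imports Main "HOL-Library.Extended_Real"
begin

definition simple_graph :: "'a set \<Rightarrow> ('a \<Rightarrow> 'a \<Rightarrow> bool) \<Rightarrow> bool" where
  "simple_graph V E \<longleftrightarrow> finite V \<and> (\<forall>u v. E u v \<longrightarrow> u \<in> V \<and> v \<in> V)
     \<and> (\<forall>u v. E u v \<longrightarrow> E v u) \<and> (\<forall>v. \<not> E v v)"

definition is_path :: "'a set \<Rightarrow> ('a \<Rightarrow> 'a \<Rightarrow> bool) \<Rightarrow> 'a list \<Rightarrow> bool" where
  "is_path V E P \<longleftrightarrow> P \<noteq> [] \<and> distinct P \<and> set P \<subseteq> V
     \<and> (\<forall>i < length P - 1. E (P ! i) (P ! Suc i))"

definition terminal_paths :: "'a set \<Rightarrow> ('a \<Rightarrow> 'a \<Rightarrow> bool) \<Rightarrow> 'a set \<Rightarrow> 'a list set" where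
  "terminal_paths V E T = {P. is_path V E P \<and> hd P \<in> T \<and> last P \<in> T \<and> hd P \<noteq> last P}"

text \<open>Feasible solutions of the LP relaxation (only values on V - T matter).\<close>
definition lp_feasible :: "'a set \<Rightarrow> ('a \<Rightarrow> 'a \<Rightarrow> bool) \<Rightarrow> 'a set \<Rightarrow> ('a \<Rightarrow> real) \<Rightarrow> bool" where
  "lp_feasible V E T d \<longleftrightarrow> (\<forall>v \<in> V - T. d v \<ge> 0)
     \<and> (\<forall>P \<in> terminal_paths V E T. (\<Sum>v \<in> set P - T. d v) \<ge> 1)"

text \<open>Optimum of the LP relaxation (as extended real; +\<infinity> if infeasible).\<close>
definition LP :: "'a set \<Rightarrow> ('a \<Rightarrow> 'a \<Rightarrow> bool) \<Rightarrow> 'a set \<Rightarrow> ereal" where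
  "LP V E T = Inf {ereal (\<Sum>v \<in> V - T. d v) | d. lp_feasible V E T d}"

definition LP_fix0 :: "'a set \<Rightarrow> ('a \<Rightarrow> 'a \<Rightarrow> bool) \<Rightarrow> 'a set \<Rightarrow> 'a \<Rightarrow> ereal" where
  "LP_fix0 V E T w = Inf {ereal (\<Sum>v \<in> V - T. d v) | d. lp_feasible V E T d \<and> d w = 0}"

end

theory Submission
  imports Defs
begin

lemma is_path_succ:
  "is_path V E P \<longleftrightarrow> P \<noteq> [] \<and> distinct P \<and> set P \<subseteq> V \<and> successively E P"
  unfolding is_path_def successively_conv_nth by (auto simp: less_diff_conv)

lemma walk_to_path:
  assumes "successively E xs" "xs \<noteq> []"
  shows "\<exists>ys. successively E ys \<and> distinct ys \<and> ys \<noteq> [] \<and> hd ys = hd xs \<and> last ys = last xs \<and> set ys \<subseteq> set xs"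
  using assms
proof (induction xs)
  case Nil then show ?case by simp
next
  case (Cons x xs)
  show ?case
  proof (cases "xs = []")
    case True then show ?thesis by (intro exI[of _ "[x]"]) auto
  next
    case False
    with Cons.prems have e: "E x (hd xs)" and s: "successively E xs" by (auto simp: successively_Cons)
    from Cons.IH[OF s False] obtain ys where ys: "successively E ys" "distinct ys" "ys \<noteq> []"
      "hd ys = hd xs" "last ys = last xs" "set ys \<subseteq> set xs" by blast
    show ?thesis
    proof (cases "x \<in> set ys")
      case False
      then show ?thesis using ys e False \<open>xs \<noteq> []\<close>
        by (intro exI[of _ "x # ys"]) (auto simp: successively_Cons)
    next
      case True
      then obtain as bs where ab: "ys = as @ x # bs" by (meson split_list)
      show ?thesis
        using ys \<open>xs \<noteq> []\<close> unfolding ab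
        by (intro exI[of _ "x # bs"]) (auto simp: successively_append_iff)
    qed
  qed
qed

lemma walk_terminal_path:
  assumes "successively E xs" "xs \<noteq> []" "set xs \<subseteq> V" "hd xs \<in> T" "last xs \<in> T" "hd xs \<noteq> last xs"
  shows "\<exists>Q \<in> terminal_paths V E T. set Q \<subseteq> set xs"
proof -
  from walk_to_path[OF assms(1,2)] obtain ys where ys: "successively E ys" "distinct ys" "ys \<noteq> []"
      "hd ys = hd xs" "last ys = last xs" "set ys \<subseteq> set xs" by blast
  then show ?thesis using assms unfolding terminal_paths_def is_path_succ
    by (intro bexI[of _ ys]) auto
qed

lemma finite_unif_delta:
  assumes "finite A" "\<forall>w\<in>A. \<exists>\<delta>>0. P w \<delta>"
    "\<And>w \<delta> \<delta>'. P w \<delta> \<Longrightarrow> 0 < \<delta>' \<Longrightarrow> \<delta>' \<le> \<delta> \<Longrightarrow> P w \<delta>'"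
  shows "\<exists>\<delta>>(0::real). \<delta> \<le> 1 \<and> (\<forall>w\<in>A. P w \<delta>)"
  using assms(1,2)
proof (induction A rule: finite_induct)
  case empty then show ?case by (intro exI[of _ 1]) auto
next
  case (insert a A)
  then obtain \<delta> where d: "\<delta> > 0" "\<delta> \<le> 1" "\<forall>w\<in>A. P w \<delta>" by auto
  from insert.prems obtain \<delta>' where d': "\<delta>' > 0" "P a \<delta>'" by auto
  show ?case using d d' assms(3)
    by (intro exI[of _ "min \<delta> \<delta>'"]) (auto simp: min_def)
qed


lemma sum_if_const:
  assumes "finite A"
  shows "(\<Sum>v\<in>A. if v \<in> N then c else 0) = (c::real) * real (card (A \<inter> N))"
  using assms by (simp add: sum.If_cases Int_def)

lemma filter_split3:
  assumes "filter p (as @ x # bs) = f0 # f1 # f2 # rest" "p x" "x = f1" "x \<notin> set as"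
    and dF: "distinct (f0 # f1 # f2 # rest)"
  shows "(\<exists>y\<in>set as. p y) \<and> (\<exists>z\<in>set bs. p z)"
proof -
  have eq: "filter p as @ x # filter p bs = f0 # f1 # f2 # rest" using assms(1,2) by simp
  show ?thesis
  proof (cases "filter p as")
    case Nil
    then show ?thesis using eq assms(3,4) dF by simp
  next
    case (Cons a as')
    then have a: "a \<in> set (filter p as)" by simp
    show ?thesis
    proof (cases as')
      case Nil
      then have "filter p bs = f2 # rest" using eq Cons by simp
      then have "f2 \<in> set (filter p bs)" by simp
      then show ?thesis using a by auto
    next
      case (Cons b as'')
      then have "b = f1" using eq \<open>filter p as = a # as'\<close> by simp
      moreover have "b \<in> set (filter p as)" using Cons \<open>filter p as = a # as'\<close> by simp
      ultimately show ?thesis using assms(3,4) by simp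
    qed
  qed
qed



theorem mainTheorem7:
  fixes V T :: "'a set" and E :: "'a \<Rightarrow> 'a \<Rightarrow> bool" and k :: int
  assumes G: "simple_graph V E"
    and TV: "T \<subseteq> V"
    and R1a: "\<forall>s \<in> T. \<forall>t \<in> T. \<not> E s t"
    and R1b: "ereal (real_of_int k) - LP V E T \<ge> 0"
    and R2: "\<forall>w \<in> V - T. \<forall>s \<in> T. \<forall>t \<in> T. E w s \<and> E w t \<longrightarrow> s = t"
    and R3: "\<forall>t \<in> T. \<forall>w \<in> V - T. E t w \<longrightarrow> LP_fix0 V E T w > LP V E T"
    and R5: "\<forall>v \<in> V. card {t \<in> T. E\<^sup>*\<^sup>* v t} \<ge> 2"
  shows "int (card T) \<le> 2 * k"
proof (rule ccontr)
  assume neg: "\<not> int (card T) \<le> 2 * k"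
  define S where "S = (\<lambda>d::'a\<Rightarrow>real. \<Sum>v\<in>V-T. d v)"
  have finV: "finite V" using G by (simp add: simple_graph_def)
  have symE: "\<And>u v. E u v \<Longrightarrow> E v u" using G by (simp add: simple_graph_def)
  have EV: "\<And>u v. E u v \<Longrightarrow> u \<in> V \<and> v \<in> V" using G by (simp add: simple_graph_def)
  have irr: "\<And>v. \<not> E v v" using G by (simp add: simple_graph_def)
  have LP_lower: "\<And>d. lp_feasible V E T d \<Longrightarrow> LP V E T \<le> ereal (S d)"
    unfolding LP_def S_def by (rule Inf_lower) blast
  have LPF_lower: "\<And>d w. lp_feasible V E T d \<Longrightarrow> d w = 0 \<Longrightarrow> LP_fix0 V E T w \<le> ereal (S d)"
    unfolding LP_fix0_def S_def by (rule Inf_lower) blast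
  have LP_ge0: "LP V E T \<ge> 0" unfolding LP_def
    by (rule Inf_greatest) (auto simp: lp_feasible_def intro!: sum_nonneg)
  have LP_fin: "LP V E T \<noteq> \<infinity>" using R1b by auto
  define L where "L = real_of_ereal (LP V E T)"
  have LPL: "LP V E T = ereal L" using LP_ge0 LP_fin L_def by (cases "LP V E T") auto
  have L0: "0 \<le> L" using LP_ge0 LPL by simp
  have Lk: "L \<le> real_of_int k" using R1b LPL by simp
  define N where "N = {w \<in> V - T. \<exists>t\<in>T. E t w}"
  have NV: "N \<subseteq> V - T" unfolding N_def by auto
  have finN: "finite N" using NV finV by (meson finite_Diff finite_subset)
  have nb: "\<exists>w. w \<in> N \<and> E t w" if tT: "t \<in> T" for t
  proof -
    have tV: "t \<in> V" using tT TV by auto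
    have c2: "card {t' \<in> T. E\<^sup>*\<^sup>* t t'} \<ge> 2" using R5 tV by auto
    have "\<exists>t'. t' \<in> T \<and> E\<^sup>*\<^sup>* t t' \<and> t' \<noteq> t"
    proof (rule ccontr)
      assume "\<not> ?thesis"
      then have "{t' \<in> T. E\<^sup>*\<^sup>* t t'} \<subseteq> {t}" by auto
      then have "card {t' \<in> T. E\<^sup>*\<^sup>* t t'} \<le> card {t}"
        by (intro card_mono) auto
      then show False using c2 by simp
    qed
    then obtain t' where t': "t' \<in> T" "E\<^sup>*\<^sup>* t t'" "t' \<noteq> t" by blast
    from t'(2,3) obtain w where "E t w" by (metis converse_rtranclpE)
    then show ?thesis using EV R1a tT unfolding N_def by blast
  qed
  define f where "f = (\<lambda>t. SOME w. w \<in> N \<and> E t w)"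
  have f: "f t \<in> N \<and> E t (f t)" if "t \<in> T" for t
    unfolding f_def using nb[OF that] by (rule someI_ex)
  have inj: "inj_on f T"
  proof (rule inj_onI)
    fix s t assume st: "s \<in> T" "t \<in> T" "f s = f t"
    have "f s \<in> V - T" using f[OF st(1)] NV by auto
    moreover have "E (f s) s" "E (f s) t" using f[OF st(1)] f[OF st(2)] st(3) symE by auto
    ultimately show "s = t" using R2 st by blast
  qed
  have cardTN: "card T \<le> card N"
    using card_inj_on_le[OF inj _ finN] f by auto
  have Tne: "T \<noteq> {}" using neg L0 Lk by auto
  define n where "n = card V"
  have n0: "n > 0" using Tne TV finV n_def by (metis card_gt_0_iff subset_empty)
  have cardN: "card N \<le> n" unfolding n_def using NV finV by (meson Diff_subset card_mono subset_trans)
  have "\<exists>\<delta>>(0::real). \<delta> \<le> 1 \<and> (\<forall>w\<in>N. ereal (L+\<delta>) \<le> LP_fix0 V E T w)"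
  proof (rule finite_unif_delta[OF finN])
    show "\<forall>w\<in>N. \<exists>\<delta>>0. ereal (L + \<delta>) \<le> LP_fix0 V E T w"
    proof
      fix w assume "w \<in> N"
      then have "LP V E T < LP_fix0 V E T w" using R3 unfolding N_def by auto
      then obtain z where z: "ereal L < ereal z" "ereal z < LP_fix0 V E T w"
        using LPL ereal_dense2 by metis
      then show "\<exists>\<delta>>0. ereal (L + \<delta>) \<le> LP_fix0 V E T w"
        by (intro exI[of _ "z - L"]) auto
    qed
  next
    fix w \<delta> \<delta>' assume "ereal (L + \<delta>) \<le> LP_fix0 V E T w" "0 < (\<delta>'::real)" "\<delta>' \<le> \<delta>"
    then show "ereal (L + \<delta>') \<le> LP_fix0 V E T w" by (meson add_left_mono ereal_less_eq(3) order_trans)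
  qed
  then obtain \<delta> :: real where d0: "\<delta> > 0" "\<delta> \<le> 1" and dfix: "\<forall>w\<in>N. ereal (L+\<delta>) \<le> LP_fix0 V E T w"
    by blast
  define \<eta> where "\<eta> = \<delta> / (2 * n)"
  define \<epsilon> where "\<epsilon> = \<eta> / (n + 2)"
  define \<gamma> where "\<gamma> = \<epsilon> / 2"
  have \<eta>0: "\<eta> > 0" "\<eta> \<le> 1/2" using d0 n0 unfolding \<eta>_def by (auto simp: field_simps)
  have \<epsilon>0: "\<epsilon> > 0" "\<epsilon> * (n+2) = \<eta>" "\<epsilon> \<le> 1/4" using \<eta>0 n0 unfolding \<epsilon>_def by (auto simp: field_simps)
  have "\<epsilon> * 1 \<le> \<epsilon> * (n+2)" by (rule mult_left_mono) (use \<epsilon>0 in auto)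
  then have "\<epsilon> \<le> \<eta>" using \<epsilon>0(2) by (metis mult.right_neutral)
  moreover have "\<delta> / (2*n) \<le> \<delta> / 1" by (rule divide_left_mono) (use d0 n0 in auto)
  then have "\<eta> \<le> \<delta>" unfolding \<eta>_def by simp
  ultimately have \<gamma>\<delta>: "\<gamma> \<le> \<delta> / 2" "\<gamma> > 0" using \<epsilon>0 unfolding \<gamma>_def by auto
  have "LP V E T < ereal (L + \<gamma>)" using LPL \<gamma>\<delta> by simp
  then obtain d where dF: "lp_feasible V E T d" and dS: "S d < L + \<gamma>"
    unfolding LP_def S_def by (auto simp: Inf_less_iff)
  have dpos: "\<And>v. v \<in> V - T \<Longrightarrow> 0 \<le> d v" using dF by (auto simp: lp_feasible_def)
  have dP: "\<And>P. P \<in> terminal_paths V E T \<Longrightarrow> (\<Sum>v\<in>set P - T. d v) \<ge> 1"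
    using dF by (auto simp: lp_feasible_def)
  have tp: "P \<noteq> [] \<and> distinct P \<and> set P \<subseteq> V \<and> successively E P \<and> hd P \<in> T \<and> last P \<in> T \<and> hd P \<noteq> last P"
    if "P \<in> terminal_paths V E T" for P
    using that unfolding terminal_paths_def is_path_succ by auto
  have dN: "d w \<ge> \<eta>" if wN: "w \<in> N" for w
  proof -
    have wVT: "w \<in> V - T" using wN NV by auto
    have dw0: "d w \<ge> 0" using dpos wVT by auto
    define d' where "d' = (\<lambda>v. if v = w then 0 else if E w v then d v + d w else d v)"
    have d'F: "lp_feasible V E T d'"
      unfolding lp_feasible_def
    proof (intro conjI ballI)
      fix v assume "v \<in> V - T" then show "0 \<le> d' v" using dpos dw0 unfolding d'_def by auto
    next
      fix P assume PT: "P \<in> terminal_paths V E T"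
      note tpP = tp[OF PT]
      have finP: "finite (set P - T)" by simp
      have PVT: "set P - T \<subseteq> V - T" using tpP by auto
      show "1 \<le> (\<Sum>v\<in>set P - T. d' v)"
      proof (cases "w \<in> set P")
        case False
        have "(\<Sum>v\<in>set P - T. d v) \<le> (\<Sum>v\<in>set P - T. d' v)"
          by (rule sum_mono) (use False dw0 in \<open>auto simp: d'_def\<close>)
        then show ?thesis using dP[OF PT] by linarith
      next
        case True
        then obtain as bs where P: "P = as @ w # bs" by (meson split_list)
        have "as \<noteq> []" using tpP wVT P by auto
        moreover have "bs \<noteq> []" using tpP wVT P by auto
        ultimately have e1: "E (last as) w" and e2: "E w (hd bs)"
          using tpP unfolding P by (auto simp: successively_append_iff successively_Cons)
        have "last as \<in> set as" "hd bs \<in> set bs" using \<open>as \<noteq> []\<close> \<open>bs \<noteq> []\<close> by auto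
        then have ne: "last as \<noteq> hd bs" using tpP unfolding P by auto
        have inP: "last as \<in> set P" "hd bs \<in> set P" using \<open>as \<noteq> []\<close> \<open>bs \<noteq> []\<close> P by auto
        have "\<exists>x. x \<in> set P - T \<and> x \<noteq> w \<and> E w x"
        proof (cases "last as \<in> T")
          case True
          then have "hd bs \<notin> T" using R2 wVT e1 e2 symE ne by blast
          then show ?thesis using e2 irr inP by blast
        next
          case False
          then show ?thesis using e1 symE irr inP by blast
        qed
        then obtain x where x: "x \<in> set P - T" "x \<noteq> w" "E w x" by blast
        define g where "g = (\<lambda>v. d v - (if v = w then d w else 0) + (if v = x then d w else 0))"
        have "(\<Sum>v\<in>set P - T. g v) \<le> (\<Sum>v\<in>set P - T. d' v)"
          by (rule sum_mono) (use x dw0 PVT dpos in \<open>auto simp: d'_def g_def\<close>)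
        moreover have "(\<Sum>v\<in>set P - T. g v) = (\<Sum>v\<in>set P - T. d v)"
          unfolding g_def using x True wVT
          by (simp add: sum.distrib sum_subtractf sum.delta)
        ultimately show ?thesis using dP[OF PT] by linarith
      qed
    qed
    have "d' w = 0" unfolding d'_def by simp
    then have "LP_fix0 V E T w \<le> ereal (S d')" using LPF_lower d'F by blast
    then have "L + \<delta> \<le> S d'" using dfix wN by (meson ereal_less_eq(3) order_trans)
    moreover have "S d' \<le> (\<Sum>v\<in>V-T. d v + d w)"
      unfolding S_def by (rule sum_mono) (use dw0 dpos in \<open>auto simp: d'_def\<close>)
    moreover have "(\<Sum>v\<in>V-T. d v + d w) = S d + real (card (V - T)) * d w"
      unfolding S_def by (simp add: sum.distrib)
    moreover have "real (card (V - T)) * d w \<le> n * d w"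
      using dw0 finV unfolding n_def by (intro mult_right_mono) (auto simp: card_mono)
    ultimately have "L + \<delta> < L + \<gamma> + n * d w" using dS by linarith
    then have "\<delta> / 2 < n * d w" using \<gamma>\<delta> by linarith
    then show ?thesis using n0 unfolding \<eta>_def by (auto simp: field_simps)
  qed
  have key: "(\<Sum>v\<in>set P - T. d v) \<ge> 1 + \<eta>"
    if PT: "P \<in> terminal_paths V E T" and c3: "card (set P \<inter> N) \<ge> 3" for P
  proof -
    note tpP = tp[OF PT]
    define F where "F = filter (\<lambda>v. v \<in> N) P"
    have "distinct F" using tpP F_def by simp
    moreover have "set F = set P \<inter> N" unfolding F_def by auto
    ultimately have "length F \<ge> 3" using c3 by (metis distinct_card)
    then obtain f0 f1 f2 rest where F: "F = f0 # f1 # f2 # rest"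
      by (metis Suc_le_length_iff numeral_3_eq_3)
    have "f1 \<in> set F" using F by simp
    then have f1N: "f1 \<in> N" "f1 \<in> set P" unfolding F_def by auto
    then obtain as bs where P: "P = as @ f1 # bs" by (meson split_list)
    have "f1 \<notin> set as" using tpP P by simp
    then have "(\<exists>y\<in>set as. y \<in> N) \<and> (\<exists>z\<in>set bs. z \<in> N)"
      using filter_split3[of "\<lambda>v. v \<in> N" as f1 bs f0 f1 f2 rest] F f1N P \<open>distinct F\<close> unfolding F_def by simp
    then obtain y z where yz: "y \<in> set as" "y \<in> N" "z \<in> set bs" "z \<in> N" by blast
    have asne: "as \<noteq> []" "bs \<noteq> []" using yz by auto
    obtain u where u: "u \<in> T" "E u f1" using f1N unfolding N_def by auto
    have f1VT: "f1 \<in> V - T" using f1N NV by auto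
    have sub: "(\<Sum>v\<in>set P - T. d v) \<ge> 1 + \<eta>"
      if Q: "Q \<in> terminal_paths V E T" "set Q - T \<subseteq> A" "A \<subseteq> set P - T" "r \<in> set P - T" "r \<notin> A" "r \<in> N"
      for Q A r
    proof -
      have "1 \<le> (\<Sum>v\<in>set Q - T. d v)" using dP[OF Q(1)] .
      also have "\<dots> \<le> (\<Sum>v\<in>A. d v)"
        by (rule sum_mono2) (use Q dpos tpP in \<open>auto intro: finite_subset\<close>)
      also have "\<dots> + d r = (\<Sum>v\<in>insert r A. d v)"
        using Q by (subst sum.insert) (auto intro: finite_subset)
      also have "\<dots> \<le> (\<Sum>v\<in>set P - T. d v)"
        by (rule sum_mono2) (use Q dpos tpP in auto)
      finally show ?thesis using dN[OF Q(6)] by linarith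
    qed
    show ?thesis
    proof (cases "u = hd P")
      case False
      define W where "W = as @ [f1, u]"
      have "successively E W" using tpP u symE asne unfolding W_def P
        by (auto simp: successively_append_iff successively_Cons)
      moreover have "W \<noteq> []" "set W \<subseteq> V" "hd W \<in> T" "last W \<in> T" "hd W \<noteq> last W"
        using tpP u asne False EV unfolding W_def P by auto
      ultimately obtain Q where Q: "Q \<in> terminal_paths V E T" "set Q \<subseteq> set W"
        using walk_terminal_path by blast
      show ?thesis
        apply (rule sub[OF Q(1), of "insert f1 (set as) - T" z])
        using Q(2) u tpP yz NV unfolding W_def P by auto
    next
      case True
      define W where "W = u # f1 # bs"
      have "successively E W" using tpP u symE asne unfolding W_def P
        by (auto simp: successively_append_iff successively_Cons)
      moreover have "W \<noteq> []" "set W \<subseteq> V" "hd W \<in> T" "last W \<in> T" "hd W \<noteq> last W"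
        using tpP u asne True EV unfolding W_def P by auto
      ultimately obtain Q where Q: "Q \<in> terminal_paths V E T" "set Q \<subseteq> set W"
        using walk_terminal_path by blast
      show ?thesis
        apply (rule sub[OF Q(1), of "insert f1 (set bs) - T" y])
        using Q(2) u tpP yz NV unfolding W_def P by auto
    qed
  qed
  define d2 where "d2 = (\<lambda>v. (d v - (if v \<in> N then \<epsilon> else 0)) / (1 - 2 * \<epsilon>))"
  have den: "1 - 2 * \<epsilon> > 0" using \<epsilon>0 by linarith
  have d2sum: "(\<Sum>v\<in>A. d2 v) = ((\<Sum>v\<in>A. d v) - \<epsilon> * card (A \<inter> N)) / (1 - 2 * \<epsilon>)"
    if "finite A" for A
    unfolding d2_def using that
    by (simp add: sum_divide_distrib[symmetric] sum_subtractf sum_if_const)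
  have d2F: "lp_feasible V E T d2"
    unfolding lp_feasible_def
  proof (intro conjI ballI)
    fix v assume v: "v \<in> V - T"
    have "d v - (if v \<in> N then \<epsilon> else 0) \<ge> 0"
      using dpos[OF v] dN \<epsilon>0 \<eta>0 n0 by (auto simp: field_simps) (smt (verit) of_nat_0_le_iff mult_nonneg_nonneg)
    then show "0 \<le> d2 v" unfolding d2_def using den by simp
  next
    fix P assume PT: "P \<in> terminal_paths V E T"
    have cP: "card (set P \<inter> N) \<le> n" using cardN finN by (meson card_mono inf_le2 order_trans)
    have "(set P - T) \<inter> N = set P \<inter> N" using NV by auto
    then have eq: "(\<Sum>v\<in>set P - T. d2 v) = ((\<Sum>v\<in>set P - T. d v) - \<epsilon> * card (set P \<inter> N)) / (1 - 2 * \<epsilon>)"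
      using d2sum[of "set P - T"] by simp
    have "(\<Sum>v\<in>set P - T. d v) - \<epsilon> * card (set P \<inter> N) \<ge> 1 - 2 * \<epsilon>"
    proof (cases "card (set P \<inter> N) \<ge> 3")
      case True
      have "\<epsilon> * card (set P \<inter> N) \<le> \<epsilon> * n" using cP \<epsilon>0 by simp
      also have "\<dots> \<le> \<eta>" using \<epsilon>0 by (simp add: algebra_simps)
      finally show ?thesis using key[OF PT True] \<epsilon>0 by linarith
    next
      case False
      then have "card (set P \<inter> N) \<le> 2" by simp
      then have "\<epsilon> * card (set P \<inter> N) \<le> \<epsilon> * 2" using \<epsilon>0 by (intro mult_left_mono) auto
      then show ?thesis using dP[OF PT] by linarith
    qed
    then show "1 \<le> (\<Sum>v\<in>set P - T. d2 v)" unfolding eq using den by simp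
  qed
  have "LP V E T \<le> ereal (S d2)" using LP_lower d2F by blast
  then have "L \<le> S d2" using LPL by simp
  moreover have "S d2 = (S d - \<epsilon> * card N) / (1 - 2 * \<epsilon>)"
  proof -
    have "(V - T) \<inter> N = N" using NV by auto
    then show ?thesis unfolding S_def using d2sum[of "V - T"] finV by simp
  qed
  ultimately have "L * (1 - 2 * \<epsilon>) \<le> S d - \<epsilon> * card N" using den by (simp add: field_simps)
  then have "\<epsilon> * card N < \<epsilon> * (2 * L + 1/2)" using dS unfolding \<gamma>_def by (simp add: algebra_simps)
  then have "card N < 2 * L + 1/2" using \<epsilon>0 by simp
  moreover have "real (card T) \<ge> 2 * L + 1" using neg Lk by linarith
  ultimately show False using cardTN by linarith
qed

end
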